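(* Let $D\subset\mathbb R^N$ be a domain and $p\ge2$. For $f,g\in L^p(D)$ set \[ w(p,f,g)^2=p(p-1)\int_0^1 s|sg+(1-s)f|^{p-2}ds \] pointwise, and $E(f,g)=\|f\|_{L^p(D)}^p+(p-1)\|g\|_{L^p(D)}^p-p\int_D|g|^{p-2}gf\,dx$. Then $E(f,g)=\|w(p,f,g)(f-g)\|^2_{L^2(D)}$, and moreover: (1) (First type.) Let \[ \lambda_p=\min_{x\in[1/2,1]}\{x^p+(1-x)^{p-1}(x+p-1)\}. \] Then $\lambda_p\in[2^{-p},p\,2^{1-p}]$, $\lambda_2=1$, and for all $f,g\in L^p(D)$, \[ E(f,g)=\|w(p,f,g)(f-g)\|^2_{L^2(D)}\ge\lambda_p\|f-g\|^p_{L^p(D)}. \] (2) (Second type.) For all $f,g\in L^p(D)$, \[ E(f,g)=\|w(p,f,g)(f-g)\|^2_{L^2(D)}\ge\frac p2\int_D|g|^{p-2}(f-g)^2dx. \] *)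

theory Defs
  imports "HOL-Analysis.Analysis"
begin

text \<open>|x|^a with the convention |x|^0 = 1 (also at x = 0), as in the paper
  (for p = 2 the weight |.|^(p-2) is identically 1).\<close>
definition abspow :: "real \<Rightarrow> real \<Rightarrow> real" where
  "abspow x a = (if a = 0 then 1 else \<bar>x\<bar> powr a)"

definition in_Lp :: "real \<Rightarrow> ('a::euclidean_space) set \<Rightarrow> ('a \<Rightarrow> real) \<Rightarrow> bool" where
  "in_Lp p D f \<longleftrightarrow> f \<in> borel_measurable (lebesgue_on D)
      \<and> integrable (lebesgue_on D) (\<lambda>x. \<bar>f x\<bar> powr p)"

definition wfun :: "real \<Rightarrow> ('a \<Rightarrow> real) \<Rightarrow> ('a \<Rightarrow> real) \<Rightarrow> 'a \<Rightarrow> real" where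
  "wfun p f g x = sqrt (p * (p - 1) *
      integral {0..1} (\<lambda>s::real. s * abspow (s * g x + (1 - s) * f x) (p - 2)))"

definition Efun :: "real \<Rightarrow> ('a::euclidean_space) set \<Rightarrow> ('a \<Rightarrow> real) \<Rightarrow> ('a \<Rightarrow> real) \<Rightarrow> real" where
  "Efun p D f g = (\<integral>x. \<bar>f x\<bar> powr p \<partial>lebesgue_on D)
     + (p - 1) * (\<integral>x. \<bar>g x\<bar> powr p \<partial>lebesgue_on D)
     - p * (\<integral>x. abspow (g x) (p - 2) * g x * f x \<partial>lebesgue_on D)"

definition lambda_p :: "real \<Rightarrow> real" where
  "lambda_p p = Inf ((\<lambda>x. x powr p + (1 - x) powr (p - 1) * (x + p - 1)) ` {1/2..1})"

end

theory Submission
  imports Defs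
begin

lemma abspow_nonneg: "abspow x a \<ge> 0"
  by (simp add: abspow_def)

lemma abspow_minus: "abspow (-x) a = abspow x a"
  by (simp add: abspow_def)

lemma abspow_mono: "a \<ge> 0 \<Longrightarrow> \<bar>x\<bar> \<le> \<bar>y\<bar> \<Longrightarrow> abspow x a \<le> abspow y a"
  by (simp add: abspow_def powr_mono2)

lemma powr_plus1: "(x::real) > 0 \<Longrightarrow> x powr (a + 1) = x powr a * x"
  using powr_add[of x a 1] by simp

lemma psi_eq: assumes "p \<ge> 2" "z \<ge> 0" shows "abspow z (p-2) * z = z powr (p-1)"
proof (cases "z = 0")
  case True then show ?thesis using assms by (simp add: abspow_def)
next
  case False
  then have "z > 0" using assms by simp
  have "z powr (p-1) = z powr ((p-2) + 1)" by simp
  also have "\<dots> = z powr (p-2) * z" using \<open>z>0\<close> by (rule powr_plus1)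
  finally show ?thesis using assms
    by (auto simp add: abspow_def)
qed

lemma phi_eq: assumes "p \<ge> 2" shows "\<bar>t\<bar> powr p = t * (abspow t (p-2) * t)"
proof (cases "t = 0")
  case True then show ?thesis using assms by (simp add: abspow_def)
next
  case False
  then have "\<bar>t\<bar> > 0" by simp
  have "t * (abspow t (p-2) * t) = abspow t (p-2) * \<bar>t\<bar> * \<bar>t\<bar>"
    by (simp add: abs_mult_self_eq mult.commute mult.left_commute)
  also have "\<dots> = \<bar>t\<bar> powr p"
  proof -
    have "\<bar>t\<bar> powr p = \<bar>t\<bar> powr ((p-2) + 1 + 1)" by simp
    also have "\<dots> = \<bar>t\<bar> powr (p-2) * \<bar>t\<bar> * \<bar>t\<bar>" using \<open>\<bar>t\<bar> > 0\<close> by (simp only: powr_plus1)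
    finally show ?thesis using assms \<open>\<bar>t\<bar> > 0\<close>
      by (auto simp add: abspow_def)
  qed
  finally show ?thesis by simp
qed

lemma psi_deriv:
  assumes p: "p \<ge> 2"
  shows "((\<lambda>t. abspow t (p-2) * t) has_real_derivative (p-1) * abspow t (p-2)) (at t)"
proof (cases "p = 2")
  case True
  then show ?thesis by (simp add: abspow_def)
next
  case False
  then have p2: "p > 2" using p by simp
  consider "t > 0" | "t < 0" | "t = 0" by linarith
  then show ?thesis
  proof cases
    case 1
    have d: "((\<lambda>z. z powr (p-1)) has_real_derivative (p-1) * t powr (p-1-1)) (at t)"
      using 1 by (rule has_real_derivative_powr)
    show ?thesis
    proof (rule has_field_derivative_transform_within_open[OF _ open_greaterThan, of _ _ t 0])
      show "((\<lambda>z. z powr (p-1)) has_real_derivative (p-1) * abspow t (p-2)) (at t)"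
        using d 1 p2 by (simp add: abspow_def)
      show "t \<in> {0<..}" using 1 by simp
      show "x powr (p - 1) = abspow x (p - 2) * x" if "x \<in> {0<..}" for x
        using psi_eq[OF p, of x] that by simp
    qed
  next
    case 2
    have d0: "((\<lambda>z. z powr (p-1)) has_real_derivative (p-1) * (-t) powr (p-1-1)) (at (-t))"
      using 2 by (intro has_real_derivative_powr) simp
    have d: "((\<lambda>z. - ((-z) powr (p-1))) has_real_derivative (p-1) * (-t) powr (p-1-1)) (at t)"
      using DERIV_minus[OF DERIV_chain2[OF d0 DERIV_minus[OF DERIV_ident]]]
      by simp
    show ?thesis
    proof (rule has_field_derivative_transform_within_open[OF _ open_lessThan, of _ _ t 0])
      show "((\<lambda>z. - ((-z) powr (p-1))) has_real_derivative (p-1) * abspow t (p-2)) (at t)"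
        using d 2 p2 by (simp add: abspow_def)
      show "t \<in> {..<0}" using 2 by simp
      show "- ((-x) powr (p - 1)) = abspow x (p - 2) * x" if "x \<in> {..<0}" for x
        using psi_eq[OF p, of "-x"] that by (simp add: abspow_def)
    qed
  next
    case 3
    have "((\<lambda>y. \<bar>y\<bar> powr (p-2)) \<longlongrightarrow> \<bar>0\<bar> powr (p-2)) (at 0)"
      using p2 by (intro tendsto_intros) auto
    then have lim: "((\<lambda>y. \<bar>y\<bar> powr (p-2)) \<longlongrightarrow> 0) (at 0)" using p2 by simp
    have "((\<lambda>y. (abspow y (p-2) * y - abspow 0 (p-2) * 0) / (y - 0)) \<longlongrightarrow> 0) (at 0)"
    proof (rule Lim_transform_eventually[OF lim])
      show "\<forall>\<^sub>F y in at 0. \<bar>y\<bar> powr (p-2) = (abspow y (p-2) * y - abspow 0 (p-2) * 0) / (y - 0)"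
        using p2 by (auto simp: abspow_def eventually_at_filter)
    qed
    then show ?thesis using 3 p2 by (simp add: has_field_derivative_iff abspow_def)
  qed
qed

lemma phi_deriv:
  assumes p: "p \<ge> 2"
  shows "((\<lambda>t. \<bar>t\<bar> powr p) has_real_derivative p * (abspow t (p-2) * t)) (at t)"
proof -
  have "((\<lambda>t. t * (abspow t (p-2) * t)) has_real_derivative p * (abspow t (p-2) * t)) (at t)"
    by (rule DERIV_cong[OF DERIV_mult[OF DERIV_ident psi_deriv[OF p]]]) (simp add: algebra_simps)
  then show ?thesis using phi_eq[OF p] by simp
qed

lemma abspow_cont:
  assumes p: "p \<ge> 2" and f: "continuous_on S f"
  shows "continuous_on S (\<lambda>s. abspow (f s) (p-2))"
proof (cases "p = 2")
  case True then show ?thesis by (simp add: abspow_def)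
next
  case False
  then have "p > 2" using p by simp
  have "continuous_on S (\<lambda>s. \<bar>f s\<bar> powr (p-2))"
    using \<open>p > 2\<close> by (intro continuous_on_powr' continuous_intros f) auto
  then show ?thesis using False by (simp add: abspow_def)
qed

definition Kf :: "real \<Rightarrow> real \<Rightarrow> real \<Rightarrow> real" where
  "Kf p a b = integral {0..1} (\<lambda>s::real. s * abspow (s * b + (1 - s) * a) (p - 2))"

lemma Kf_integrable:
  assumes p: "p \<ge> 2"
  shows "(\<lambda>s::real. s * abspow (s * b + (1 - s) * a) (p - 2)) integrable_on {0..1}"
  by (intro integrable_continuous_interval continuous_intros abspow_cont p)

lemma Kf_nonneg:
  assumes p: "p \<ge> 2"
  shows "Kf p a b \<ge> 0"
  unfolding Kf_def
  by (rule integral_nonneg[OF Kf_integrable[OF p]]) (auto intro: abspow_nonneg mult_nonneg_nonneg)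

definition Ff :: "real \<Rightarrow> real \<Rightarrow> real \<Rightarrow> real" where
  "Ff p a b = \<bar>a\<bar> powr p + (p-1) * \<bar>b\<bar> powr p - p * (abspow b (p-2) * b * a)"

lemma taylor:
  assumes p: "p \<ge> 2"
  shows "p * (p-1) * (a-b)^2 * Kf p a b = Ff p a b"
proof -
  define u where "u s = s * b + (1 - s) * a" for s :: real
  define G where "G s = - (\<bar>u s\<bar> powr p) - (a - b) * p * (s * (abspow (u s) (p-2) * u s))" for s
  define G' where "G' s = p * (p-1) * (a-b)^2 * (s * abspow (u s) (p-2))" for s
  have du: "(u has_real_derivative (b - a)) (at s)" for s
    unfolding u_def by (auto intro!: derivative_eq_intros)
  have dG: "(G has_real_derivative G' s) (at s)" for s
  proof -
    have d1: "((\<lambda>s. \<bar>u s\<bar> powr p) has_real_derivative p * (abspow (u s) (p-2) * u s) * (b - a)) (at s)"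
      by (rule DERIV_chain2[OF phi_deriv[OF p] du])
    have d2: "((\<lambda>s. abspow (u s) (p-2) * u s) has_real_derivative (p-1) * abspow (u s) (p-2) * (b - a)) (at s)"
      by (rule DERIV_chain2[OF psi_deriv[OF p] du])
    note d3 = DERIV_mult[OF DERIV_ident d2]
    have "(G has_real_derivative - (p * (abspow (u s) (p-2) * u s) * (b - a))
       - (a - b) * p * (1 * (abspow (u s) (p-2) * u s) + (p-1) * abspow (u s) (p-2) * (b - a) * s)) (at s)"
      unfolding G_def by (rule DERIV_diff[OF DERIV_minus[OF d1] DERIV_cmult[OF d3]])
    moreover have "- (p * (abspow (u s) (p-2) * u s) * (b - a))
       - (a - b) * p * (1 * (abspow (u s) (p-2) * u s) + (p-1) * abspow (u s) (p-2) * (b - a) * s) = G' s"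
      unfolding G'_def by (simp add: algebra_simps power2_eq_square)
    ultimately show ?thesis by simp
  qed
  have "(G' has_integral (G 1 - G 0)) {0..1}"
    by (rule fundamental_theorem_of_calculus)
       (auto intro!: has_field_derivative_at_within[OF dG] simp: has_real_derivative_iff_has_vector_derivative[symmetric])
  then have "integral {0..1} G' = G 1 - G 0" by (rule integral_unique)
  moreover have "integral {0..1} G' = p * (p-1) * (a-b)^2 * Kf p a b"
    unfolding G'_def Kf_def u_def by simp
  moreover have "G 1 - G 0 = Ff p a b"
    unfolding G_def u_def Ff_def using phi_eq[OF p, of b] by (simp add: algebra_simps)
  ultimately show ?thesis by simp
qed

lemma abspow_mult: "abspow (x * y) a = abspow x a * abspow y a"
  by (simp add: abspow_def abs_mult powr_mult)

lemma Ff_hom: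
  assumes p: "p \<ge> 2"
  shows "Ff p (t * a) (t * b) = \<bar>t\<bar> powr p * Ff p a b"
proof -
  have 1: "\<bar>t * a\<bar> powr p = \<bar>t\<bar> powr p * \<bar>a\<bar> powr p"
    by (simp add: abs_mult powr_mult)
  have 2: "\<bar>t * b\<bar> powr p = \<bar>t\<bar> powr p * \<bar>b\<bar> powr p"
    by (simp add: abs_mult powr_mult)
  have 3: "abspow (t * b) (p-2) * (t * b) * (t * a) = (t * (abspow t (p-2) * t)) * (abspow b (p-2) * b * a)"
    by (simp add: abspow_mult algebra_simps)
  show ?thesis unfolding Ff_def 1 2 3 phi_eq[OF p, of t, symmetric]
    by (simp add: algebra_simps)
qed

lemma type2_norm:
  assumes p: "p \<ge> 2"
  shows "Ff p a 1 \<ge> p / 2 * (a - 1)^2"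
proof -
  define m where "m a = Ff p a 1 - p / 2 * (a - 1)^2" for a
  have m_eq: "m a = \<bar>a\<bar> powr p + (p - 1) - p * a - p / 2 * (a - 1)^2" for a
    unfolding m_def Ff_def by (simp add: abspow_def)
  have dm: "(m has_real_derivative p * (abspow x (p-2) * x) - p - p * (x - 1)) (at x)" for x
  proof -
    have q: "((\<lambda>x. p / 2 * (x - 1)^2) has_real_derivative p * (x - 1)) (at x)"
      by (auto intro!: derivative_eq_intros)
    have "(m has_real_derivative p * (abspow x (p-2) * x) + 0 - p * 1 - p * (x - 1)) (at x)"
      unfolding m_eq[abs_def]
      by (intro DERIV_diff DERIV_add phi_deriv[OF p] DERIV_const DERIV_cmult DERIV_ident q)
    then show ?thesis by (simp add: algebra_simps)
  qed
  have cm: "continuous_on S m" for S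
    using dm by (meson DERIV_isCont continuous_at_imp_continuous_on)
  have m1: "m 1 = 0" and mm1: "m (-1) = 0" by (simp_all add: m_eq)
  have ge1: "abspow x (p-2) \<ge> 1" if "\<bar>x\<bar> \<ge> 1" for x
    using that p by (auto simp: abspow_def intro: ge_one_powr_ge_zero)
  have le1: "abspow x (p-2) \<le> 1" if "\<bar>x\<bar> \<le> 1" for x
    using that p by (auto simp: abspow_def intro: powr_le1)
  consider "a \<ge> 1" | "0 \<le> a" "a \<le> 1" | "-1 \<le> a" "a \<le> 0" | "a \<le> -1" by linarith
  then have "m a \<ge> 0"
  proof cases
    case 1
    have "m 1 \<le> m a"
    proof (rule DERIV_nonneg_imp_increasing_open[OF 1 _ cm])
      fix x assume "1 < x" "x < a"
      then have "abspow x (p-2) * x \<ge> 1 * x" using ge1[of x] by (intro mult_right_mono) auto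
      then show "\<exists>y. (m has_real_derivative y) (at x) \<and> 0 \<le> y" using dm[of x] p
        by (intro exI[of _ "p * (abspow x (p-2) * x) - p - p * (x - 1)"]) (auto simp: algebra_simps)
    qed
    then show ?thesis using m1 by simp
  next
    case 2
    have "m a \<ge> m 1"
    proof (rule DERIV_nonpos_imp_decreasing_open[OF 2(2) _ cm])
      fix x assume "a < x" "x < 1"
      then have "abspow x (p-2) * x \<le> 1 * x" using le1[of x] 2 by (intro mult_right_mono) auto
      then show "\<exists>y. (m has_real_derivative y) (at x) \<and> y \<le> 0" using dm[of x] p
        by (intro exI[of _ "p * (abspow x (p-2) * x) - p - p * (x - 1)"]) (auto simp: algebra_simps)
    qed
    then show ?thesis using m1 by simp
  next
    case 3
    have "m (-1) \<le> m a"
    proof (rule DERIV_nonneg_imp_increasing_open[OF 3(1) _ cm])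
      fix x assume "-1 < x" "x < a"
      then have "abspow x (p-2) * x \<ge> 1 * x" using le1[of x] 3 by (intro mult_right_mono_neg) auto
      then show "\<exists>y. (m has_real_derivative y) (at x) \<and> 0 \<le> y" using dm[of x] p
        by (intro exI[of _ "p * (abspow x (p-2) * x) - p - p * (x - 1)"]) (auto simp: algebra_simps)
    qed
    then show ?thesis using mm1 by simp
  next
    case 4
    have "m a \<ge> m (-1)"
    proof (rule DERIV_nonpos_imp_decreasing_open[OF 4 _ cm])
      fix x assume "a < x" "x < -1"
      then have "abspow x (p-2) * x \<le> 1 * x" using ge1[of x] by (intro mult_right_mono_neg) auto
      then show "\<exists>y. (m has_real_derivative y) (at x) \<and> y \<le> 0" using dm[of x] p
        by (intro exI[of _ "p * (abspow x (p-2) * x) - p - p * (x - 1)"]) (auto simp: algebra_simps)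
    qed
    then show ?thesis using mm1 by simp
  qed
  then show ?thesis unfolding m_def by simp
qed

lemma type2:
  assumes p: "p \<ge> 2"
  shows "Ff p a b \<ge> p / 2 * abspow b (p-2) * (a - b)^2"
proof (cases "b = 0")
  case True
  show ?thesis
  proof (cases "p = 2")
    case True
    then show ?thesis using \<open>b = 0\<close> by (simp add: Ff_def abspow_def)
  next
    case False
    then show ?thesis using \<open>b = 0\<close> p by (simp add: Ff_def abspow_def)
  qed
next
  case False
  have "Ff p a b = Ff p (b * (a / b)) (b * 1)" using False by simp
  also have "\<dots> = \<bar>b\<bar> powr p * Ff p (a / b) 1" by (rule Ff_hom[OF p])
  finally have e: "Ff p a b = \<bar>b\<bar> powr p * Ff p (a / b) 1" .
  have "\<bar>b\<bar> powr p * (p / 2 * (a / b - 1)^2) \<le> \<bar>b\<bar> powr p * Ff p (a / b) 1"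
    by (intro mult_left_mono type2_norm[OF p]) auto
  moreover have "\<bar>b\<bar> powr p * (p / 2 * (a / b - 1)^2) = p / 2 * abspow b (p-2) * (a - b)^2"
  proof -
    have "(a / b - 1)^2 = (a - b)^2 / b^2" using False by (simp add: field_simps)
    then show ?thesis unfolding phi_eq[OF p, of b] using False
      by (simp add: field_simps power2_eq_square)
  qed
  ultimately show ?thesis using e by linarith
qed

lemma refl01: "integral {0..1} (\<lambda>s. q (1 - s)) = integral {0..1::real} q"
proof -
  have "integral {0..1} (\<lambda>s. q (1 - s)) = integral {0..1} ((\<lambda>y. q (-y)) \<circ> (+) (-1))"
    by (simp add: o_def)
  also have "\<dots> = integral {0 + -1..1 + -1} (\<lambda>y. q (-y))"
    by (rule integral_shift_Icc_real)
  also have "\<dots> = integral {0..1} q"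
    using Henstock_Kurzweil_Integration.integral_reflect_real[of 1 0 q] by simp
  finally show ?thesis .
qed

definition kf :: "real \<Rightarrow> real \<Rightarrow> real" where
  "kf p x = integral {0..1} (\<lambda>s::real. s * abspow (x - s) (p - 2))"

lemma hx_eq:
  assumes p: "p \<ge> 2"
  shows "Ff p x (x - 1) = p * (p - 1) * kf p x"
proof -
  have "Kf p x (x - 1) = kf p x"
    unfolding Kf_def kf_def by (simp add: algebra_simps)
  then show ?thesis using taylor[OF p, of x "x - 1"] by simp
qed

lemma kf_mono:
  assumes p: "p \<ge> 2" and "1 \<le> x" "x \<le> y"
  shows "kf p x \<le> kf p y"
  unfolding kf_def
proof (rule integral_le)
  show "(\<lambda>s. s * abspow (x - s) (p - 2)) integrable_on {0..1}"
    by (intro integrable_continuous_interval continuous_intros abspow_cont p)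
  show "(\<lambda>s. s * abspow (y - s) (p - 2)) integrable_on {0..1}"
    by (intro integrable_continuous_interval continuous_intros abspow_cont p)
  fix s :: real assume "s \<in> {0..1}"
  then show "s * abspow (x - s) (p - 2) \<le> s * abspow (y - s) (p - 2)"
    using assms by (intro mult_left_mono abspow_mono) auto
qed

lemma kf_refl:
  assumes p: "p \<ge> 2" and x: "x \<le> 1/2"
  shows "kf p (1 - x) \<le> kf p x"
proof -
  define g where "g t = abspow t (p-2)" for t
  have gc: "continuous_on S (\<lambda>s. g (f s))" if "continuous_on S f" for S f
    unfolding g_def by (rule abspow_cont[OF p that])
  define r where "r s = (2 * s - 1) * g (x - s)" for s
  have ir: "r integrable_on {0..1}" unfolding r_def
    by (intro integrable_continuous_interval continuous_intros gc)
  have ir2: "(\<lambda>s. r (1 - s)) integrable_on {0..1}" unfolding r_def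
    by (intro integrable_continuous_interval continuous_intros gc)
  have i1: "(\<lambda>s. s * g (x - s)) integrable_on {0..1}"
    by (intro integrable_continuous_interval continuous_intros gc)
  have i2: "(\<lambda>s. (1 - s) * g (x - s)) integrable_on {0..1}"
    by (intro integrable_continuous_interval continuous_intros gc)
  have "kf p (1 - x) = integral {0..1} (\<lambda>s. (1 - (1 - s)) * g (x - (1 - s)))"
    unfolding kf_def g_def
  proof (rule integral_cong)
    fix s :: real
    have "abspow (1 - x - s) (p - 2) = abspow (-(1 - x - s)) (p - 2)" by (rule abspow_minus[symmetric])
    then show "s * abspow (1 - x - s) (p - 2) = (1 - (1 - s)) * abspow (x - (1 - s)) (p - 2)"
      by (simp add: algebra_simps)
  qed
  also have "\<dots> = integral {0..1} (\<lambda>s. (1 - s) * g (x - s))"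
    by (rule refl01[where q="\<lambda>s. (1 - s) * g (x - s)"])
  finally have k1: "kf p (1 - x) = integral {0..1} (\<lambda>s. (1 - s) * g (x - s))" .
  have "integral {0..1} r = integral {0..1} (\<lambda>s. s * g (x - s) - (1 - s) * g (x - s))"
    unfolding r_def by (rule integral_cong) (simp add: algebra_simps)
  also have "\<dots> = kf p x - kf p (1 - x)"
    unfolding k1 using Henstock_Kurzweil_Integration.integral_diff[OF i1 i2]
    by (simp add: kf_def g_def)
  finally have kr: "integral {0..1} r = kf p x - kf p (1 - x)" .
  have "0 \<le> integral {0..1} (\<lambda>s. r s + r (1 - s))"
  proof (rule integral_nonneg)
    show "(\<lambda>s. r s + r (1 - s)) integrable_on {0..1}" using ir ir2 by (rule integrable_add)
    fix s :: real assume s: "s \<in> {0..1}"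
    have e: "r s + r (1 - s) = (2 * s - 1) * (g (x - s) - g (x - 1 + s))"
      unfolding r_def by (simp add: algebra_simps)
    show "0 \<le> r s + r (1 - s)"
    proof (cases "s \<ge> 1/2")
      case True
      have "g (x - 1 + s) \<le> g (x - s)" unfolding g_def
        using True x s p by (intro abspow_mono) auto
      then show ?thesis unfolding e using True by (intro mult_nonneg_nonneg) auto
    next
      case False
      have "g (x - s) \<le> g (x - 1 + s)" unfolding g_def
        using False x s p by (intro abspow_mono) auto
      then show ?thesis unfolding e using False by (intro mult_nonpos_nonpos) auto
    qed
  qed
  also have "integral {0..1} (\<lambda>s. r s + r (1 - s)) = 2 * integral {0..1} r"
    using Henstock_Kurzweil_Integration.integral_add[OF ir ir2] refl01[of r] by simp
  finally show ?thesis using kr by simp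
qed

lemma hx_H:
  assumes p: "p \<ge> 2" and y: "1/2 \<le> y" "y \<le> 1"
  shows "Ff p y (y - 1) = y powr p + (1 - y) powr (p - 1) * (y + p - 1)"
proof -
  have z: "1 - y \<ge> 0" using y by simp
  have e1: "abspow (y - 1) (p-2) * (y - 1) = - ((1 - y) powr (p - 1))"
    using psi_eq[OF p z] abspow_minus[of "1 - y" "p-2"] by (simp add: algebra_simps)
  have e2: "\<bar>y - 1\<bar> powr p = (1 - y) * (1 - y) powr (p - 1)"
    using phi_eq[OF p, of "1 - y"] psi_eq[OF p z] by (simp add: abs_minus_commute)
  have e3: "\<bar>y\<bar> = y" using y by simp
  show ?thesis unfolding Ff_def e1 e2 e3 by (simp add: algebra_simps)
qed

lemma H_nonneg:
  fixes p y :: real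
  assumes p: "p \<ge> 2" and y: "1/2 \<le> y" "y \<le> 1"
  shows "0 \<le> y powr p + (1 - y) powr (p - 1) * (y + p - 1)"
  using assms by (intro add_nonneg_nonneg mult_nonneg_nonneg) auto

lemma lam_bdd:
  fixes p :: real
  assumes p: "p \<ge> 2"
  shows "bdd_below ((\<lambda>x. x powr p + (1 - x) powr (p - 1) * (x + p - 1)) ` {1/2..1})"
  using H_nonneg[OF p] by (intro bdd_belowI[of _ 0]) auto

lemma hx_ge_lam:
  assumes p: "p \<ge> 2"
  shows "Ff p x (x - 1) \<ge> lambda_p p"
proof -
  have base: "Ff p y (y - 1) \<ge> lambda_p p" if "1/2 \<le> y" "y \<le> 1" for y
    unfolding hx_H[OF p that] lambda_p_def
    by (rule cInf_lower[OF _ lam_bdd[OF p]]) (use that in auto)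
  have c: "p * (p - 1) \<ge> 0" using p by simp
  have up: "Ff p y (y - 1) \<ge> lambda_p p" if "y \<ge> 1/2" for y
  proof (cases "y \<le> 1")
    case True then show ?thesis using base that by simp
  next
    case False
    have "Ff p 1 (1 - 1) \<le> Ff p y (y - 1)"
      unfolding hx_eq[OF p] using False by (intro mult_left_mono[OF kf_mono[OF p] c]) auto
    then show ?thesis using base[of 1] by simp
  qed
  show ?thesis
  proof (cases "x \<ge> 1/2")
    case True then show ?thesis by (rule up)
  next
    case False
    have "Ff p (1 - x) ((1 - x) - 1) \<le> Ff p x (x - 1)"
      unfolding hx_eq[OF p] using False by (intro mult_left_mono[OF kf_refl[OF p] c]) auto
    moreover have "Ff p (1 - x) ((1 - x) - 1) \<ge> lambda_p p" using False by (intro up) auto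
    ultimately show ?thesis by simp
  qed
qed

lemma type1:
  assumes p: "p \<ge> 2"
  shows "Ff p a b \<ge> lambda_p p * \<bar>a - b\<bar> powr p"
proof (cases "a = b")
  case True
  then have "Ff p a b = 0" using taylor[OF p, of a b] by simp
  then show ?thesis using True p by simp
next
  case False
  define d where "d = a - b"
  have d: "d \<noteq> 0" using False d_def by simp
  have e1: "d * (a / d) = a" using d by simp
  have e2: "d * (a / d - 1) = b" using d by (simp add: right_diff_distrib d_def)
  have "Ff p a b = Ff p (d * (a / d)) (d * (a / d - 1))"
    unfolding e1 e2 ..
  also have "\<dots> = \<bar>d\<bar> powr p * Ff p (a / d) (a / d - 1)" by (rule Ff_hom[OF p])
  finally have "Ff p a b = \<bar>d\<bar> powr p * Ff p (a / d) (a / d - 1)" .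
  moreover have "\<bar>d\<bar> powr p * lambda_p p \<le> \<bar>d\<bar> powr p * Ff p (a / d) (a / d - 1)"
    by (intro mult_left_mono hx_ge_lam[OF p]) auto
  ultimately show ?thesis by (simp add: d_def mult.commute)
qed

lemma lam_bounds:
  assumes p: "p \<ge> 2"
  shows "lambda_p p \<in> {2 powr (-p) .. p * 2 powr (1 - p)}"
proof -
  have "2 powr (-p) \<le> Inf ((\<lambda>x. x powr p + (1 - x) powr (p - 1) * (x + p - 1)) ` {1/2..1})"
  proof (rule cInf_greatest)
    show "(\<lambda>x. x powr p + (1 - x) powr (p - 1) * (x + p - 1)) ` {1/2..1} \<noteq> {}" by simp
    fix z assume "z \<in> (\<lambda>x. x powr p + (1 - x) powr (p - 1) * (x + p - 1)) ` {1/2..1}"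
    then obtain x where x: "1/2 \<le> x" "x \<le> 1" and z: "z = x powr p + (1 - x) powr (p - 1) * (x + p - 1)"
      by auto
    have "2 powr (-p) = (1/2) powr p" by (simp add: powr_minus_divide powr_divide)
    also have "\<dots> \<le> x powr p" using x p by (intro powr_mono2) auto
    also have "\<dots> \<le> z" unfolding z using x p by (intro add_increasing2 mult_nonneg_nonneg) auto
    finally show "2 powr (-p) \<le> z" .
  qed
  then have L: "2 powr (-p) \<le> lambda_p p" unfolding lambda_p_def .
  have "lambda_p p \<le> (1/2) powr p + (1 - 1/2) powr (p - 1) * (1/2 + p - 1)"
    unfolding lambda_p_def by (rule cInf_lower[OF _ lam_bdd[OF p]]) (rule imageI, simp)
  also have "\<dots> = p * 2 powr (1 - p)"
  proof -
    have a: "(1/2::real) powr p = 2 powr (-p)" by (simp add: powr_minus_divide powr_divide)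
    have b: "(1 - 1/2::real) powr (p - 1) = 2 * 2 powr (-p)"
      by (simp add: powr_minus_divide powr_divide powr_diff)
    have c: "(2::real) powr (1 - p) = 2 * 2 powr (-p)"
      by (simp add: powr_diff powr_minus_divide)
    show ?thesis unfolding a b c by (simp add: algebra_simps)
  qed
  finally have U: "lambda_p p \<le> p * 2 powr (1 - p)" .
  show ?thesis using L U by simp
qed

lemma lam2: "lambda_p 2 = 1"
proof -
  have "(\<lambda>x. x powr 2 + (1 - x) powr (2 - 1) * (x + 2 - 1)) ` {1/2..1::real} = {1}"
  proof -
    have "x powr 2 + (1 - x) powr (2 - 1) * (x + 2 - 1) = 1" if "1/2 \<le> x" "x \<le> 1" for x :: real
    proof -
      have "x powr 2 = x^2" using that by simp
      moreover have "(1 - x) powr (2 - 1) = 1 - x" using that by simp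
      ultimately show ?thesis by (simp add: algebra_simps power2_eq_square)
    qed
    then show ?thesis by (auto intro!: image_eqI[of _ _ 1])
  qed
  then show ?thesis unfolding lambda_p_def by simp
qed

lemma Ff_nonneg:
  assumes p: "p \<ge> 2"
  shows "Ff p a b \<ge> 0"
  using taylor[OF p, of a b, symmetric] Kf_nonneg[OF p, of a b] p by simp

lemma cross_bound:
  assumes p: "p \<ge> 2"
  shows "\<bar>abspow b (p-2) * b * a\<bar> \<le> \<bar>a\<bar> powr p + \<bar>b\<bar> powr p"
proof -
  have pa: "\<bar>a\<bar> powr p = \<bar>a\<bar> powr (p-1) * \<bar>a\<bar>"
    using phi_eq[OF p, of "\<bar>a\<bar>"] psi_eq[OF p, of "\<bar>a\<bar>"] by (simp add: algebra_simps)
  have pb: "\<bar>b\<bar> powr p = \<bar>b\<bar> powr (p-1) * \<bar>b\<bar>"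
    using phi_eq[OF p, of "\<bar>b\<bar>"] psi_eq[OF p, of "\<bar>b\<bar>"] by (simp add: algebra_simps)
  have e: "\<bar>abspow b (p-2) * b * a\<bar> = \<bar>b\<bar> powr (p-1) * \<bar>a\<bar>"
  proof -
    have "abspow b (p-2) = abspow \<bar>b\<bar> (p-2)" by (simp add: abspow_def)
    then have "\<bar>abspow b (p-2) * b * a\<bar> = (abspow \<bar>b\<bar> (p-2) * \<bar>b\<bar>) * \<bar>a\<bar>"
      using abspow_nonneg[of b "p-2"] by (simp add: abs_mult)
    then show ?thesis using psi_eq[OF p, of "\<bar>b\<bar>"] by simp
  qed
  show ?thesis
  proof (cases "\<bar>a\<bar> \<le> \<bar>b\<bar>")
    case True
    have "\<bar>b\<bar> powr (p-1) * \<bar>a\<bar> \<le> \<bar>b\<bar> powr (p-1) * \<bar>b\<bar>"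
      using True by (intro mult_left_mono) auto
    then show ?thesis unfolding e pb using powr_ge_zero[of "\<bar>a\<bar>" p] by linarith
  next
    case False
    have "\<bar>b\<bar> powr (p-1) * \<bar>a\<bar> \<le> \<bar>a\<bar> powr (p-1) * \<bar>a\<bar>"
      using False p by (intro mult_right_mono powr_mono2) auto
    then show ?thesis unfolding e pa using powr_ge_zero[of "\<bar>b\<bar>" p] by linarith
  qed
qed

theorem mainTheorem12:
  fixes D :: "(real ^ 'n) set" and p :: real
  assumes "open D" and "connected D" and "D \<noteq> {}" and "p \<ge> 2"
  shows "lambda_p p \<in> {2 powr (-p) .. p * 2 powr (1 - p)}
    \<and> lambda_p 2 = 1
    \<and> (\<forall>f g. in_Lp p D f \<longrightarrow> in_Lp p D g \<longrightarrow>
          integrable (lebesgue_on D) (\<lambda>x. (wfun p f g x * (f x - g x))\<^sup>2)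
          \<and> Efun p D f g = (\<integral>x. (wfun p f g x * (f x - g x))\<^sup>2 \<partial>lebesgue_on D)
          \<and> (\<integral>x. (wfun p f g x * (f x - g x))\<^sup>2 \<partial>lebesgue_on D)
               \<ge> lambda_p p * (\<integral>x. \<bar>f x - g x\<bar> powr p \<partial>lebesgue_on D)
          \<and> (\<integral>x. (wfun p f g x * (f x - g x))\<^sup>2 \<partial>lebesgue_on D)
               \<ge> p / 2 * (\<integral>x. abspow (g x) (p - 2) * (f x - g x)\<^sup>2 \<partial>lebesgue_on D))"
proof -
  have p: "p \<ge> 2" by fact
  have lamb: "lambda_p p \<in> {2 powr (-p) .. p * 2 powr (1 - p)}" by (rule lam_bounds[OF p])
  then have lampos: "lambda_p p > 0" by (smt (verit) atLeastAtMost_iff powr_gt_zero)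
  have main: "integrable (lebesgue_on D) (\<lambda>x. (wfun p f g x * (f x - g x))\<^sup>2)
          \<and> Efun p D f g = (\<integral>x. (wfun p f g x * (f x - g x))\<^sup>2 \<partial>lebesgue_on D)
          \<and> (\<integral>x. (wfun p f g x * (f x - g x))\<^sup>2 \<partial>lebesgue_on D)
               \<ge> lambda_p p * (\<integral>x. \<bar>f x - g x\<bar> powr p \<partial>lebesgue_on D)
          \<and> (\<integral>x. (wfun p f g x * (f x - g x))\<^sup>2 \<partial>lebesgue_on D)
               \<ge> p / 2 * (\<integral>x. abspow (g x) (p - 2) * (f x - g x)\<^sup>2 \<partial>lebesgue_on D)"
    if f: "in_Lp p D f" and g: "in_Lp p D g" for f g
  proof -
    let ?M = "lebesgue_on D"
    have fm: "f \<in> borel_measurable ?M" and If: "integrable ?M (\<lambda>x. \<bar>f x\<bar> powr p)"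
      using f by (auto simp: in_Lp_def)
    have gm: "g \<in> borel_measurable ?M" and Ig: "integrable ?M (\<lambda>x. \<bar>g x\<bar> powr p)"
      using g by (auto simp: in_Lp_def)
    have W: "(wfun p f g x * (f x - g x))\<^sup>2 = Ff p (f x) (g x)" for x
    proof -
      have k: "0 \<le> p * (p - 1) * Kf p (f x) (g x)"
        using p Kf_nonneg[OF p] by (intro mult_nonneg_nonneg) auto
      have "(wfun p f g x * (f x - g x))\<^sup>2 = (sqrt (p * (p - 1) * Kf p (f x) (g x)))^2 * (f x - g x)^2"
        unfolding wfun_def Kf_def by (simp add: power_mult_distrib)
      also have "\<dots> = p * (p - 1) * (f x - g x)^2 * Kf p (f x) (g x)"
        using k by (simp add: algebra_simps)
      also have "\<dots> = Ff p (f x) (g x)" by (rule taylor[OF p])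
      finally show ?thesis .
    qed
    have am: "(\<lambda>x. abspow (g x) (p - 2)) \<in> borel_measurable ?M"
      unfolding abspow_def using gm by measurable
    have Cm: "(\<lambda>x. abspow (g x) (p - 2) * g x * f x) \<in> borel_measurable ?M"
      using am gm fm by measurable
    have IC: "integrable ?M (\<lambda>x. abspow (g x) (p - 2) * g x * f x)"
      by (rule Bochner_Integration.integrable_bound[OF Bochner_Integration.integrable_add[OF If Ig] Cm])
         (auto intro!: AE_I2 cross_bound[OF p, THEN order_trans])
    have IF: "integrable ?M (\<lambda>x. Ff p (f x) (g x))"
      unfolding Ff_def using If Ig IC by auto
    have IW: "integrable ?M (\<lambda>x. (wfun p f g x * (f x - g x))\<^sup>2)"
      unfolding W by (rule IF)
    have EW: "Efun p D f g = (\<integral>x. (wfun p f g x * (f x - g x))\<^sup>2 \<partial>?M)"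
      unfolding W Efun_def Ff_def using If Ig IC by simp
    have T1: "(\<integral>x. (wfun p f g x * (f x - g x))\<^sup>2 \<partial>?M) \<ge> lambda_p p * (\<integral>x. \<bar>f x - g x\<bar> powr p \<partial>?M)"
    proof -
      have "(\<integral>x. lambda_p p * \<bar>f x - g x\<bar> powr p \<partial>?M) \<le> (\<integral>x. (wfun p f g x * (f x - g x))\<^sup>2 \<partial>?M)"
        by (rule integral_mono'[OF IW]) (auto simp: W intro: Ff_nonneg[OF p] type1[OF p] order_trans[OF _ type1[OF p]])
      then show ?thesis by simp
    qed
    have T2: "(\<integral>x. (wfun p f g x * (f x - g x))\<^sup>2 \<partial>?M) \<ge> p / 2 * (\<integral>x. abspow (g x) (p - 2) * (f x - g x)\<^sup>2 \<partial>?M)"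
    proof -
      have "(\<integral>x. p / 2 * (abspow (g x) (p - 2) * (f x - g x)\<^sup>2) \<partial>?M) \<le> (\<integral>x. (wfun p f g x * (f x - g x))\<^sup>2 \<partial>?M)"
      proof (rule integral_mono'[OF IW])
        fix x
        show "p / 2 * (abspow (g x) (p - 2) * (f x - g x)\<^sup>2) \<le> (wfun p f g x * (f x - g x))\<^sup>2"
          unfolding W using type2[OF p, where a="f x" and b="g x"] by (simp add: mult.assoc)
        show "0 \<le> (wfun p f g x * (f x - g x))\<^sup>2" by simp
      qed
      then show ?thesis by simp
    qed
    show ?thesis using IW EW T1 T2 by blast
  qed
  show ?thesis using lamb lam2 main by blast
qed

end
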